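(* For every integer $\Delta\ge 3$, there exists a connected graph $G_\Delta$ of order $n$ and maximum degree $\Delta$ such that $F_c(G_\Delta)=\left(\frac{\Delta}{\Delta+1}\right)n+1$.
   Context: Forcing process: given a set of initially colored vertices, at each step a colored vertex with exactly one non-colored neighbor forces (colors) that neighbor. A set $S\subseteq V(G)$ is a forcing set if iterating this process from $S$ eventually colors all vertices; it is a connected forcing set if moreover the induced subgraph $G[S]$ is connected. $F_c(G)$ is the minimum cardinality of a connected forcing set of $G$. *)

theory Defs
  imports Complex_Main
begin

definition simple_graph :: "'a set \<Rightarrow> ('a \<Rightarrow> 'a \<Rightarrow> bool) \<Rightarrow> bool" where
  "simple_graph V E \<longleftrightarrow> finite V \<and> (\<forall>x y. E x y \<longrightarrow> E y x) \<and> (\<forall>x. \<not> E x x)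
     \<and> (\<forall>x y. E x y \<longrightarrow> x \<in> V \<and> y \<in> V)"

definition nbrs :: "'a set \<Rightarrow> ('a \<Rightarrow> 'a \<Rightarrow> bool) \<Rightarrow> 'a \<Rightarrow> 'a set" where
  "nbrs V E v = {u \<in> V. E v u}"

definition degree :: "'a set \<Rightarrow> ('a \<Rightarrow> 'a \<Rightarrow> bool) \<Rightarrow> 'a \<Rightarrow> nat" where
  "degree V E v = card (nbrs V E v)"

definition max_degree :: "'a set \<Rightarrow> ('a \<Rightarrow> 'a \<Rightarrow> bool) \<Rightarrow> nat" where
  "max_degree V E = Max (degree V E ` V)"

definition connected_on :: "('a \<Rightarrow> 'a \<Rightarrow> bool) \<Rightarrow> 'a set \<Rightarrow> bool" where
  "connected_on E S \<longleftrightarrow>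
     (\<forall>u\<in>S. \<forall>v\<in>S. (\<lambda>x y. E x y \<and> x \<in> S \<and> y \<in> S)\<^sup>*\<^sup>* u v)"

inductive_set forced :: "'a set \<Rightarrow> ('a \<Rightarrow> 'a \<Rightarrow> bool) \<Rightarrow> 'a set \<Rightarrow> 'a set"
  for V :: "'a set" and E :: "'a \<Rightarrow> 'a \<Rightarrow> bool" and S :: "'a set" where
  init: "s \<in> S \<Longrightarrow> s \<in> forced V E S"
| force: "u \<in> forced V E S \<Longrightarrow> w \<in> V \<Longrightarrow> E u w \<Longrightarrow>
          (\<forall>x\<in>V. E u x \<longrightarrow> x \<in> forced V E S \<or> x = w) \<Longrightarrow> w \<in> forced V E S"

definition forcing_set :: "'a set \<Rightarrow> ('a \<Rightarrow> 'a \<Rightarrow> bool) \<Rightarrow> 'a set \<Rightarrow> bool" where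
  "forcing_set V E S \<longleftrightarrow> S \<subseteq> V \<and> forced V E S = V"

definition connected_forcing_set :: "'a set \<Rightarrow> ('a \<Rightarrow> 'a \<Rightarrow> bool) \<Rightarrow> 'a set \<Rightarrow> bool" where
  "connected_forcing_set V E S \<longleftrightarrow> forcing_set V E S \<and> connected_on E S"

definition Fc :: "'a set \<Rightarrow> ('a \<Rightarrow> 'a \<Rightarrow> bool) \<Rightarrow> nat" where
  "Fc V E = (LEAST k. \<exists>S. connected_forcing_set V E S \<and> card S = k)"

end

theory Submission
  imports Defs
begin

definition RR :: "nat \<Rightarrow> nat \<Rightarrow> nat \<Rightarrow> bool" where
  "RR d x y \<longleftrightarrow> (y = Suc x \<and> y < d+5) \<or> (x = 0 \<and> d+5 \<le> y \<and> y < 2*d+4)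
      \<or> (x = d+4 \<and> 2*d+4 \<le> y \<and> y < 3*d+3)"

definition EE :: "nat \<Rightarrow> nat \<Rightarrow> nat \<Rightarrow> bool" where
  "EE d x y \<longleftrightarrow> RR d x y \<or> RR d y x"

definition VV :: "nat \<Rightarrow> nat set" where
  "VV d = {..<3*d+3}"

definition pos :: "nat \<Rightarrow> nat \<Rightarrow> nat" where
  "pos d x = (if x < d+5 then x+1 else if x < 2*d+4 then 0 else d+6)"

lemma EE_pos: "EE d x y \<Longrightarrow> pos d y = Suc (pos d x) \<or> pos d x = Suc (pos d y)"
  unfolding EE_def RR_def pos_def by auto

lemma EE_V: "d \<ge> 3 \<Longrightarrow> EE d x y \<Longrightarrow> x \<in> VV d \<and> y \<in> VV d"
  unfolding EE_def RR_def VV_def by auto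

lemma EE_sym: "EE d x y \<Longrightarrow> EE d y x"
  unfolding EE_def by auto

lemma simple: "d \<ge> 3 \<Longrightarrow> simple_graph (VV d) (EE d)"
  unfolding simple_graph_def using EE_V EE_sym
  by (auto simp: VV_def EE_def RR_def)

lemma EE_A: "d+5 \<le> x \<Longrightarrow> x < 2*d+4 \<Longrightarrow> EE d u x \<longleftrightarrow> u = 0"
  unfolding EE_def RR_def by auto

lemma EE_B: "2*d+4 \<le> x \<Longrightarrow> x < 3*d+3 \<Longrightarrow> EE d u x \<longleftrightarrow> u = d+4"
  unfolding EE_def RR_def by auto

lemma cut:
  assumes "(\<lambda>x y. E x y \<and> x \<in> S \<and> y \<in> S)\<^sup>*\<^sup>* u v" "P u" "\<not> P v"
  shows "\<exists>x y. E x y \<and> x \<in> S \<and> y \<in> S \<and> P x \<and> \<not> P y"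
  using assms
proof (induction rule: rtranclp_induct)
  case base then show ?case by simp
next
  case (step y z)
  then show ?case by (cases "P y") auto
qed

lemma conn_from:
  assumes sym: "\<And>x y. E x y \<Longrightarrow> E y x"
    and h: "\<And>v. v \<in> S \<Longrightarrow> (\<lambda>x y. E x y \<and> x \<in> S \<and> y \<in> S)\<^sup>*\<^sup>* c v"
  shows "connected_on E S"
proof -
  let ?r = "\<lambda>x y. E x y \<and> x \<in> S \<and> y \<in> S"
  have rs: "?r\<inverse>\<inverse> = ?r" using sym by (auto intro!: ext)
  show ?thesis unfolding connected_on_def
  proof (intro ballI)
    fix u v assume "u \<in> S" "v \<in> S"
    have "?r\<^sup>*\<^sup>* u c" using rtranclp_converseI[OF h[OF \<open>u \<in> S\<close>]] rs by simp
    then show "?r\<^sup>*\<^sup>* u v" using h[OF \<open>v \<in> S\<close>] by simp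
  qed
qed

lemma path_conn:
  assumes d: "d \<ge> 3" and sub: "{..<d+5} \<subseteq> S" "S \<subseteq> VV d"
  shows "connected_on (EE d) S"
proof (rule conn_from[where c=0])
  show "\<And>x y. EE d x y \<Longrightarrow> EE d y x" by (rule EE_sym)
  let ?r = "\<lambda>x y. EE d x y \<and> x \<in> S \<and> y \<in> S"
  have p: "i < d+5 \<Longrightarrow> ?r\<^sup>*\<^sup>* 0 i" for i
  proof (induction i)
    case 0 then show ?case by simp
  next
    case (Suc i)
    have h1: "?r i (Suc i)" using Suc.prems sub by (auto simp: EE_def RR_def)
    have h2: "?r\<^sup>*\<^sup>* 0 i" using Suc by simp
    show ?case by (rule rtranclp.rtrancl_into_rtrancl[OF h2 h1])
  qed
  fix v assume v: "v \<in> S"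
  show "?r\<^sup>*\<^sup>* 0 v"
  proof (cases "v < d+5")
    case True then show ?thesis by (rule p)
  next
    case False
    have vV: "v < 3*d+3" using v sub by (auto simp: VV_def)
    show ?thesis
    proof (cases "v < 2*d+4")
      case True
      have "?r 0 v" using True False v sub by (auto simp: EE_def RR_def)
      then show ?thesis by (rule r_into_rtranclp)
    next
      case F2: False
      have h1: "?r (d+4) v" using F2 vV v sub by (auto simp: EE_def RR_def)
      have h2: "?r\<^sup>*\<^sup>* 0 (d+4)" using p[of "d+4"] by simp
      show ?thesis by (rule rtranclp.rtrancl_into_rtrancl[OF h2 h1])
    qed
  qed
qed

lemma forced_sub: "S \<subseteq> V \<Longrightarrow> forced V E S \<subseteq> V"
proof
  fix w assume a: "S \<subseteq> V" "w \<in> forced V E S"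
  from a(2) a(1) show "w \<in> V" by (induction rule: forced.induct) auto
qed

lemma twin:
  assumes "w \<in> forced V E S" "x \<noteq> y" "x \<notin> S" "y \<notin> S" "x \<in> V" "y \<in> V"
    "\<And>u. E u x \<longleftrightarrow> E u y"
  shows "w \<noteq> x \<and> w \<noteq> y"
  using assms
proof (induction rule: forced.induct)
  case (init s) then show ?case by auto
next
  case (force u w)
  then show ?case by metis
qed

lemma lower:
  assumes d: "d \<ge> 3" and cfs: "connected_forcing_set (VV d) (EE d) S"
  shows "3*d+1 \<le> card S"
proof -
  let ?V = "VV d" and ?E = "EE d"
  define A where "A = {d+5..<2*d+4}"
  define B where "B = {2*d+4..<3*d+3}"
  have SV: "S \<subseteq> ?V" and fV: "forced ?V ?E S = ?V" and cS: "connected_on ?E S"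
    using cfs unfolding connected_forcing_set_def forcing_set_def by auto
  have AV: "A \<subseteq> ?V" and BV: "B \<subseteq> ?V" by (auto simp: A_def B_def VV_def)
  have hA: "\<forall>x\<in>A-S. \<forall>y\<in>A-S. x = y"
  proof (intro ballI, rule ccontr)
    fix x y assume xy: "x \<in> A-S" "y \<in> A-S" "x \<noteq> y"
    have "x \<in> forced ?V ?E S" using fV xy AV by auto
    moreover have "\<And>u. ?E u x \<longleftrightarrow> ?E u y" using xy EE_A by (auto simp: A_def)
    ultimately have "x \<noteq> x" using twin[of x ?V ?E S x y] xy AV by auto
    then show False by simp
  qed
  have hB: "\<forall>x\<in>B-S. \<forall>y\<in>B-S. x = y"
  proof (intro ballI, rule ccontr)
    fix x y assume xy: "x \<in> B-S" "y \<in> B-S" "x \<noteq> y"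
    have "x \<in> forced ?V ?E S" using fV xy BV by auto
    moreover have "\<And>u. ?E u x \<longleftrightarrow> ?E u y" using xy EE_B by (auto simp: B_def)
    ultimately have "x \<noteq> x" using twin[of x ?V ?E S x y] xy BV by auto
    then show False by simp
  qed
  have cA: "card (A-S) \<le> 1" using hA card_le_Suc0_iff_eq[of "A-S"] by (auto simp: A_def)
  have cB: "card (B-S) \<le> 1" using hB card_le_Suc0_iff_eq[of "B-S"] by (auto simp: B_def)
  obtain a where a: "a \<in> A" "a \<in> S"
  proof (rule ccontr)
    assume "\<not> thesis"
    then have "A \<subseteq> A - S" using that by auto
    then have "card A \<le> card (A - S)" by (intro card_mono) (auto simp: A_def)
    moreover have "card A = d - 1" by (simp add: A_def)
    ultimately show False using cA d by simp
  qed
  obtain b where b: "b \<in> B" "b \<in> S"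
  proof (rule ccontr)
    assume "\<not> thesis"
    then have "B \<subseteq> B - S" using that by auto
    then have "card B \<le> card (B - S)" by (intro card_mono) (auto simp: B_def)
    moreover have "card B = d - 1" by (simp add: B_def)
    ultimately show False using cB d by simp
  qed
  have path: "i \<in> S" if i: "i < d+5" for i
  proof -
    have r: "(\<lambda>x y. ?E x y \<and> x \<in> S \<and> y \<in> S)\<^sup>*\<^sup>* a b"
      using cS a b unfolding connected_on_def by auto
    have "pos d a \<le> i" using a by (simp add: A_def pos_def)
    moreover have "\<not> pos d b \<le> i" using b i by (simp add: B_def pos_def)
    ultimately obtain x y where xy: "?E x y" "x \<in> S" "y \<in> S" "pos d x \<le> i" "\<not> pos d y \<le> i"
      using cut[OF r, of "\<lambda>z. pos d z \<le> i"] by blast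
    have "pos d y = Suc i" using EE_pos[OF xy(1)] xy(4,5) by auto
    then have "y = i" using i by (auto simp: pos_def split: if_splits)
    then show ?thesis using xy by simp
  qed
  have "?V - S \<subseteq> (A - S) \<union> (B - S)"
  proof
    fix x assume x: "x \<in> ?V - S"
    then have "\<not> x < d+5" using path by auto
    then show "x \<in> (A - S) \<union> (B - S)" using x by (auto simp: A_def B_def VV_def)
  qed
  moreover have "finite ((A - S) \<union> (B - S))" by (simp add: A_def B_def)
  ultimately have "card (?V - S) \<le> card ((A - S) \<union> (B - S))" by (rule card_mono[rotated])
  also have "\<dots> \<le> card (A - S) + card (B - S)" by (rule card_Un_le)
  finally have "card (?V - S) \<le> card (A - S) + card (B - S)" .
  then have c2: "card (?V - S) \<le> 2" using cA cB by simp
  have "card (?V - (?V - S)) = card ?V - card (?V - S)"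
    by (rule card_Diff_subset) (auto simp: VV_def)
  moreover have "?V - (?V - S) = S" using SV by auto
  moreover have "card ?V = 3*d+3" by (simp add: VV_def)
  ultimately show ?thesis using c2 by simp
qed

lemma upper:
  assumes d: "d \<ge> 3"
  shows "connected_forcing_set (VV d) (EE d) (VV d - {d+5, 2*d+4}) \<and> card (VV d - {d+5, 2*d+4}) = 3*d+1"
proof -
  let ?V = "VV d" and ?E = "EE d" and ?S = "VV d - {d+5, 2*d+4}"
  have SV: "?S \<subseteq> ?V" by auto
  have conn: "connected_on ?E ?S"
    by (rule path_conn[OF d]) (use d in \<open>auto simp: VV_def\<close>)
  have ini: "z \<in> ?S \<Longrightarrow> z \<in> forced ?V ?E ?S" for z by (rule forced.init)
  have f1: "d+5 \<in> forced ?V ?E ?S"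
  proof (rule forced.force[of 0])
    show "0 \<in> forced ?V ?E ?S" using d by (intro ini) (auto simp: VV_def)
    show "d+5 \<in> ?V" using d by (auto simp: VV_def)
    show "?E 0 (d+5)" using d by (auto simp: EE_def RR_def)
    show "\<forall>x\<in>?V. ?E 0 x \<longrightarrow> x \<in> forced ?V ?E ?S \<or> x = d+5"
    proof (intro ballI impI)
      fix x assume "x \<in> ?V" "?E 0 x"
      moreover have "x \<noteq> 2*d+4" using \<open>?E 0 x\<close> d by (auto simp: EE_def RR_def)
      ultimately show "x \<in> forced ?V ?E ?S \<or> x = d+5" using ini by auto
    qed
  qed
  have f2: "2*d+4 \<in> forced ?V ?E ?S"
  proof (rule forced.force[of "d+4"])
    show "d+4 \<in> forced ?V ?E ?S" using d by (intro ini) (auto simp: VV_def)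
    show "2*d+4 \<in> ?V" using d by (auto simp: VV_def)
    show "?E (d+4) (2*d+4)" using d by (auto simp: EE_def RR_def)
    show "\<forall>x\<in>?V. ?E (d+4) x \<longrightarrow> x \<in> forced ?V ?E ?S \<or> x = 2*d+4"
    proof (intro ballI impI)
      fix x assume "x \<in> ?V" "?E (d+4) x"
      moreover have "x \<noteq> d+5" using \<open>?E (d+4) x\<close> d by (auto simp: EE_def RR_def)
      ultimately show "x \<in> forced ?V ?E ?S \<or> x = 2*d+4" using ini by auto
    qed
  qed
  have "forced ?V ?E ?S = ?V"
  proof
    show "forced ?V ?E ?S \<subseteq> ?V" by (rule forced_sub[OF SV])
    show "?V \<subseteq> forced ?V ?E ?S" using ini f1 f2 by auto
  qed
  then have cfs: "connected_forcing_set ?V ?E ?S"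
    using conn SV unfolding connected_forcing_set_def forcing_set_def by auto
  have "card ?S = card ?V - card {d+5, 2*d+4}"
    by (rule card_Diff_subset) (use d in \<open>auto simp: VV_def\<close>)
  also have "\<dots> = 3*d+1" using d by (simp add: VV_def)
  finally show ?thesis using cfs by simp
qed

lemma Fc_val: assumes d: "d \<ge> 3" shows "Fc (VV d) (EE d) = 3*d+1"
  unfolding Fc_def
proof (rule Least_equality)
  show "\<exists>S. connected_forcing_set (VV d) (EE d) S \<and> card S = 3*d+1" using upper[OF d] by blast
  show "\<And>k. \<exists>S. connected_forcing_set (VV d) (EE d) S \<and> card S = k \<Longrightarrow> 3*d+1 \<le> k"
    using lower[OF d] by blast
qed

lemma deg0: assumes d: "d \<ge> 3" shows "degree (VV d) (EE d) 0 = d"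
proof -
  have "nbrs (VV d) (EE d) 0 = insert 1 {d+5..<2*d+4}"
    using d by (auto simp: nbrs_def EE_def RR_def VV_def)
  then show ?thesis using d by (simp add: degree_def)
qed

lemma deg4: assumes d: "d \<ge> 3" shows "degree (VV d) (EE d) (d+4) = d"
proof -
  have "nbrs (VV d) (EE d) (d+4) = insert (d+3) {2*d+4..<3*d+3}"
    using d by (auto simp: nbrs_def EE_def RR_def VV_def)
  then show ?thesis using d by (simp add: degree_def)
qed

lemma degle: assumes d: "d \<ge> 3" and x: "x \<in> VV d" shows "degree (VV d) (EE d) x \<le> d"
proof (cases "x = 0 \<or> x = d+4")
  case True then show ?thesis using deg0[OF d] deg4[OF d] by auto
next
  case False
  have sub: "nbrs (VV d) (EE d) x \<subseteq> (if x < d+5 then {x-1, x+1} else if x < 2*d+4 then {0} else {d+4})"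
    using False by (auto simp: nbrs_def EE_def RR_def)
  have "card (if x < d+5 then {x-1, x+1} else if x < 2*d+4 then {0::nat} else {d+4}) \<le> 2"
    by (auto simp: card_insert_le)
  then have "card (nbrs (VV d) (EE d) x) \<le> 2"
  proof -
    have "finite (if x < d+5 then {x-1, x+1} else if x < 2*d+4 then {0::nat} else {d+4})" by simp
    from card_mono[OF this sub] show ?thesis using \<open>card _ \<le> 2\<close> by linarith
  qed
  then show ?thesis using d by (simp add: degree_def)
qed

lemma maxdeg: assumes d: "d \<ge> 3" shows "max_degree (VV d) (EE d) = d"
  unfolding max_degree_def
proof (rule Max_eqI)
  show "finite (degree (VV d) (EE d) ` VV d)" by (simp add: VV_def)
  show "\<And>y. y \<in> degree (VV d) (EE d) ` VV d \<Longrightarrow> y \<le> d" using degle[OF d] by auto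
  show "d \<in> degree (VV d) (EE d) ` VV d" using deg0[OF d] by (force simp: VV_def)
qed

theorem proposition3:
  fixes \<Delta> :: nat
  assumes "\<Delta> \<ge> 3"
  shows "\<exists>(V :: nat set) E. simple_graph V E \<and> V \<noteq> {} \<and> connected_on E V
           \<and> max_degree V E = \<Delta>
           \<and> real (Fc V E) = (real \<Delta> / (real \<Delta> + 1)) * real (card V) + 1"
proof (intro exI conjI)
  show "simple_graph (VV \<Delta>) (EE \<Delta>)" by (rule simple[OF assms])
  have "0 \<in> VV \<Delta>" by (simp add: VV_def)
  then show "VV \<Delta> \<noteq> {}" by blast
  show "connected_on (EE \<Delta>) (VV \<Delta>)" by (rule path_conn[OF assms]) (use assms in \<open>auto simp: VV_def\<close>)
  show "max_degree (VV \<Delta>) (EE \<Delta>) = \<Delta>" by (rule maxdeg[OF assms])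
  have "card (VV \<Delta>) = 3*\<Delta>+3" by (simp add: VV_def)
  moreover have "(real \<Delta> / (real \<Delta> + 1)) * real (3*\<Delta>+3) + 1 = real (3*\<Delta>+1)"
    by (simp add: field_simps)
  ultimately show "real (Fc (VV \<Delta>) (EE \<Delta>)) = (real \<Delta> / (real \<Delta> + 1)) * real (card (VV \<Delta>)) + 1"
    using Fc_val[OF assms] by simp
qed

end
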